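(* Let $G$ be a non-complete double-critical $k$-chromatic graph. Then $G$ does not contain the complete graph $K_{k-1}$ as a subgraph.
   Context: All graphs are finite and simple. A graph $G$ is (vertex-)critical if $\chi(G-v)<\chi(G)$ for every vertex $v\in V(G)$. A critical graph $G$ is double-critical if $\chi(G-x-y)\le\chi(G)-2$ for every edge $xy\in E(G)$. *)

theory Defs
  imports Main
begin

definition graph :: "'a set \<Rightarrow> 'a set set \<Rightarrow> bool" where
  "graph V E \<longleftrightarrow> finite V \<and> (\<forall>e\<in>E. \<exists>u v. u \<in> V \<and> v \<in> V \<and> u \<noteq> v \<and> e = {u, v})"

definition colorable :: "'a set \<Rightarrow> 'a set set \<Rightarrow> nat \<Rightarrow> bool" where
  "colorable V E k \<longleftrightarrow> (\<exists>f :: 'a \<Rightarrow> nat. f ` V \<subseteq> {..<k} \<and>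
      (\<forall>u\<in>V. \<forall>v\<in>V. {u, v} \<in> E \<longrightarrow> f u \<noteq> f v))"

definition chi :: "'a set \<Rightarrow> 'a set set \<Rightarrow> nat" where
  "chi V E = (LEAST k. colorable V E k)"

definition del_edges :: "'a set set \<Rightarrow> 'a set \<Rightarrow> 'a set set" where
  "del_edges E S = {e \<in> E. e \<inter> S = {}}"

definition vertex_critical :: "'a set \<Rightarrow> 'a set set \<Rightarrow> bool" where
  "vertex_critical V E \<longleftrightarrow>
     (\<forall>v\<in>V. chi (V - {v}) (del_edges E {v}) < chi V E)"

definition double_critical :: "'a set \<Rightarrow> 'a set set \<Rightarrow> bool" where
  "double_critical V E \<longleftrightarrow> vertex_critical V E \<and>
     (\<forall>x y. {x, y} \<in> E \<longrightarrow> chi (V - {x, y}) (del_edges E {x, y}) + 2 \<le> chi V E)"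

definition complete_graph :: "'a set \<Rightarrow> 'a set set \<Rightarrow> bool" where
  "complete_graph V E \<longleftrightarrow> (\<forall>u\<in>V. \<forall>v\<in>V. u \<noteq> v \<longrightarrow> {u, v} \<in> E)"

definition contains_clique :: "'a set \<Rightarrow> 'a set set \<Rightarrow> nat \<Rightarrow> bool" where
  "contains_clique V E n \<longleftrightarrow> (\<exists>S \<subseteq> V. card S = n \<and>
     (\<forall>u\<in>S. \<forall>v\<in>S. u \<noteq> v \<longrightarrow> {u, v} \<in> E))"

end

theory Submission
  imports Defs
begin

lemma graph_del: "graph V E \<Longrightarrow> graph (V - X) (del_edges E X)"
  unfolding graph_def del_edges_def by fastforce

lemma colorable_ex: assumes "graph V E" shows "colorable V E (card V)"
proof -
  have fin: "finite V" using assms unfolding graph_def by auto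
  obtain h where h: "bij_betw h V {0..<card V}" using ex_bij_betw_finite_nat[OF fin] by blast
  show ?thesis unfolding colorable_def
  proof (intro exI conjI ballI impI)
    show "h ` V \<subseteq> {..<card V}" using h by (auto simp: bij_betw_def)
  next
    fix u v assume uv: "u \<in> V" "v \<in> V" "{u, v} \<in> E"
    then have "u \<noteq> v" using assms unfolding graph_def
      by (metis doubleton_eq_iff insert_absorb2 insert_iff singleton_insert_inj_eq)
    then show "h u \<noteq> h v" using h uv by (auto simp: bij_betw_def inj_on_def)
  qed
qed

lemma chi_colorable: "graph V E \<Longrightarrow> colorable V E (chi V E)"
  unfolding chi_def by (rule LeastI, rule colorable_ex)

lemma chi_le: "colorable V E m \<Longrightarrow> chi V E \<le> m"
  unfolding chi_def by (rule Least_le)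

lemma clique_chi:
  assumes "graph V E" "S \<subseteq> V" "\<forall>u\<in>S. \<forall>v\<in>S. u \<noteq> v \<longrightarrow> {u, v} \<in> E"
  shows "card S \<le> chi V E"
proof -
  obtain f where f: "f ` V \<subseteq> {..<chi V E}" "\<forall>u\<in>V. \<forall>v\<in>V. {u, v} \<in> E \<longrightarrow> f u \<noteq> f v"
    using chi_colorable[OF assms(1)] unfolding colorable_def by blast
  have "inj_on f S" using f(2) assms(2,3) unfolding inj_on_def by blast
  moreover have "f ` S \<subseteq> {..<chi V E}" using f(1) assms(2) by blast
  ultimately have "card S \<le> card {..<chi V E}" by (intro card_inj_on_le) auto
  then show ?thesis by simp
qed

theorem proposition2:
  fixes V :: "'a set" and E :: "'a set set" and k :: nat
  assumes "graph V E"
    and "double_critical V E"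
    and "chi V E = k"
    and "\<not> complete_graph V E"
  shows "\<not> contains_clique V E (k - 1)"
proof
  assume "contains_clique V E (k - 1)"
  then obtain S where S: "S \<subseteq> V" "card S = k - 1"
    and cl: "\<forall>u\<in>S. \<forall>v\<in>S. u \<noteq> v \<longrightarrow> {u, v} \<in> E"
    unfolding contains_clique_def by blast
  have fin: "finite V" using assms(1) unfolding graph_def by auto
  have finS: "finite S" using S fin finite_subset by blast
  have k0: "k \<noteq> 0"
  proof
    assume "k = 0"
    then have "colorable V E 0" using chi_colorable[OF assms(1)] assms(3) by simp
    then have "V = {}" unfolding colorable_def by auto
    then show False using assms(4) unfolding complete_graph_def by auto
  qed
  have vc: "\<forall>v\<in>V. chi (V - {v}) (del_edges E {v}) < k"
    using assms(2,3) unfolding double_critical_def vertex_critical_def by auto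
  have dc: "\<And>x y. {x, y} \<in> E \<Longrightarrow> chi (V - {x, y}) (del_edges E {x, y}) + 2 \<le> k"
    using assms(2,3) unfolding double_critical_def by auto
  have step1: "\<forall>t\<in>V - S. \<exists>s\<in>S. {t, s} \<notin> E"
  proof (rule ccontr)
    assume "\<not> ?thesis"
    then obtain t where t: "t \<in> V" "t \<notin> S" and ta: "\<forall>s\<in>S. {t, s} \<in> E" by blast
    define K where "K = insert t S"
    have cardK: "card K = k" using t finS S(2) k0 unfolding K_def by simp
    have clK: "\<forall>u\<in>K. \<forall>v\<in>K. u \<noteq> v \<longrightarrow> {u, v} \<in> E"
      using cl ta unfolding K_def by (auto simp: insert_commute)
    have KV: "K \<subseteq> V" using S t unfolding K_def by auto
    show False
    proof (cases "V \<subseteq> K")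
      case True
      then show False using assms(4) clK unfolding complete_graph_def by auto
    next
      case False
      then obtain v where v: "v \<in> V" "v \<notin> K" by blast
      have "card K \<le> chi (V - {v}) (del_edges E {v})"
        apply (rule clique_chi[OF graph_del[OF assms(1)]])
        using KV v clK unfolding del_edges_def by auto
      then show False using vc v cardK by force
    qed
  qed
  have step2: "\<And>x y. x \<in> V - S \<Longrightarrow> y \<in> V - S \<Longrightarrow> {x, y} \<notin> E"
  proof
    fix x y assume xy: "x \<in> V - S" "y \<in> V - S" "{x, y} \<in> E"
    have "card S \<le> chi (V - {x, y}) (del_edges E {x, y})"
      apply (rule clique_chi[OF graph_del[OF assms(1)]])
      using S xy cl unfolding del_edges_def by auto
    then show False using dc[OF xy(3)] S(2) by linarith
  qed
  obtain g where g: "bij_betw g S {0..<card S}" using ex_bij_betw_finite_nat[OF finS] by blast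
  define f where "f u = (if u \<in> S then g u else g (SOME s. s \<in> S \<and> {u, s} \<notin> E))" for u
  have fT: "f t \<in> g ` S \<and> (\<exists>s\<in>S. f t = g s \<and> {t, s} \<notin> E)" if "t \<in> V - S" for t
  proof -
    have "\<exists>s. s \<in> S \<and> {t, s} \<notin> E" using step1 that by blast
    then have "(SOME s. s \<in> S \<and> {t, s} \<notin> E) \<in> S \<and> {t, (SOME s. s \<in> S \<and> {t, s} \<notin> E)} \<notin> E"
      by (rule someI_ex)
    then show ?thesis using that unfolding f_def by auto
  qed
  have "colorable V E (k - 1)" unfolding colorable_def
  proof (intro exI conjI ballI impI)
    show "f ` V \<subseteq> {..<k - 1}"
    proof
      fix z assume "z \<in> f ` V"
      then obtain u where u: "u \<in> V" "z = f u" by blast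
      have "f u \<in> g ` S"
        using fT[of u] u unfolding f_def by (cases "u \<in> S") auto
      then show "z \<in> {..<k - 1}" using g S(2) u by (auto simp: bij_betw_def)
    qed
  next
    fix u v assume uv: "u \<in> V" "v \<in> V" "{u, v} \<in> E"
    have ne: "u \<noteq> v" using assms(1) uv unfolding graph_def
      by (metis doubleton_eq_iff insert_absorb2 insert_iff singleton_insert_inj_eq)
    have inj: "inj_on g S" using g by (auto simp: bij_betw_def)
    show "f u \<noteq> f v"
    proof (cases "u \<in> S")
      case uS: True
      show ?thesis
      proof (cases "v \<in> S")
        case True
        then show ?thesis using uS ne inj unfolding f_def inj_on_def by auto
      next
        case False
        then obtain s where s: "s \<in> S" "f v = g s" "{v, s} \<notin> E" using fT[of v] uv by auto
        have "f u = g u" using uS unfolding f_def by simp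
        moreover have "s \<noteq> u" using s(3) uv(3) by (auto simp: insert_commute)
        ultimately show ?thesis using s inj uS unfolding inj_on_def by metis
      qed
    next
      case uT: False
      show ?thesis
      proof (cases "v \<in> S")
        case vS: True
        then obtain s where s: "s \<in> S" "f u = g s" "{u, s} \<notin> E" using fT[of u] uv uT by auto
        have "f v = g v" using vS unfolding f_def by simp
        moreover have "s \<noteq> v" using s(3) uv(3) by auto
        ultimately show ?thesis using s inj vS unfolding inj_on_def by metis
      next
        case False
        then show ?thesis using step2[of u v] uv uT by auto
      qed
    qed
  qed
  then have "chi V E \<le> k - 1" by (rule chi_le)
  then show False using assms(3) k0 by linarith
qed

end
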